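(* Let $n\ge 4$ and let $P_n$ be the path on $n$ vertices with end vertices $u$ and $v$. Then there exists a permutation $\sigma$ of $V(P_n)$ such that: (1) $\sigma$ is a 2-placement of $P_n$; (2) $\sigma(P_n)\subseteq P_n^4$; (3) $dist(u,\sigma(u))=1$ and $dist(v,\sigma(v))\le 1$; (4) every cycle of $\sigma$ has length at most $4$.
   Context: All graphs are finite, simple and undirected; $dist$ denotes the distance in $P_n$. For a graph $G$, a permutation $\sigma$ of $V(G)$ is a 2-placement of $G$ if for every edge $ab\in E(G)$, $\sigma(a)\sigma(b)\notin E(G)$. $G^k$ denotes the $k$-th power of $G$ (same vertex set, distinct vertices adjacent iff their distance in $G$ is at most $k$); $\sigma(G)\subseteq G^k$ means that for every edge $ab$ of $G$, $dist_G(\sigma(a),\sigma(b))\le k$. The cycles of $\sigma$ are those of its disjoint cycle decomposition, fixed points counting as cycles of length $1$. *)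

theory Defs
  imports "HOL-Combinatorics.Permutations"
begin

text \<open>The path P_n: vertex set {0..<n}, edges between consecutive integers.
  End vertices are 0 and n-1.\<close>
definition path_edge :: "nat \<Rightarrow> nat \<Rightarrow> nat \<Rightarrow> bool" where
  "path_edge n a b \<longleftrightarrow> a < n \<and> b < n \<and> (a + 1 = b \<or> b + 1 = a)"

definition path_dist :: "nat \<Rightarrow> nat \<Rightarrow> nat" where
  "path_dist a b = (if a \<le> b then b - a else a - b)"

definition two_placement :: "nat \<Rightarrow> (nat \<Rightarrow> nat) \<Rightarrow> bool" where
  "two_placement n \<sigma> \<longleftrightarrow>
     (\<forall>a b. path_edge n a b \<longrightarrow> \<not> path_edge n (\<sigma> a) (\<sigma> b))"

definition image_in_power :: "nat \<Rightarrow> nat \<Rightarrow> (nat \<Rightarrow> nat) \<Rightarrow> bool" where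
  "image_in_power n k \<sigma> \<longleftrightarrow>
     (\<forall>a b. path_edge n a b \<longrightarrow> path_dist (\<sigma> a) (\<sigma> b) \<le> k)"

definition cycle_len :: "(nat \<Rightarrow> nat) \<Rightarrow> nat \<Rightarrow> nat" where
  "cycle_len \<sigma> x = (LEAST k. 0 < k \<and> (\<sigma> ^^ k) x = x)"

end

theory Submission
  imports Defs
begin

definition tb :: "nat \<Rightarrow> nat list" where
  "tb m = (if m = 4 then [1,3,0,2] else if m = 5 then [1,3,0,2,4]
           else if m = 6 then [1,4,2,0,3,5] else [1,3,6,4,0,2,5])"

definition kk :: "nat \<Rightarrow> nat" where "kk n = 4 * (n div 4 - 1)"

definition sg :: "nat \<Rightarrow> nat \<Rightarrow> nat" where
  "sg n x = (if x < kk n then 4 * (x div 4) + [1,3,0,2] ! (x mod 4)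
             else if x < n then kk n + tb (n - kk n) ! (x - kk n) else x)"

lemma kk_props: assumes "n \<ge> 4" shows "kk n + 4 \<le> n" "n < kk n + 8" "kk n mod 4 = 0"
  using assms unfolding kk_def by auto

lemma sgA: assumes "i < 4" "4*q+4 \<le> kk n" shows "sg n (4*q+i) = 4*q + [1,3,0,2] ! i"
proof -
  have "(4*q+i) div 4 = q" "(4*q+i) mod 4 = i" using assms by auto
  thus ?thesis using assms unfolding sg_def by auto
qed

lemma sgB: assumes "i < n - kk n" shows "sg n (kk n+i) = kk n + tb (n - kk n) ! i"
  using assms unfolding sg_def by auto

lemma sg_out: "x \<ge> n \<Longrightarrow> sg n x = x"
  unfolding sg_def kk_def by auto

lemma classify: assumes "n \<ge> 4" "x < n"
  shows "(\<exists>q i. i < 4 \<and> 4*q+4 \<le> kk n \<and> x = 4*q+i) \<or> (\<exists>i. i < n - kk n \<and> x = kk n + i)"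
proof (cases "x < kk n")
  case True
  have "x = 4*(x div 4) + x mod 4" by simp
  moreover have "4*(x div 4)+4 \<le> kk n"
  proof -
    have "x div 4 < n div 4 - 1" using True unfolding kk_def by (simp add: div_less_iff_less_mult mult.commute)
    thus ?thesis unfolding kk_def by simp
  qed
  ultimately show ?thesis by (metis mod_less_divisor zero_less_numeral)
next
  case False
  then show ?thesis using assms by (intro disjI2 exI[of _ "x - kk n"]) auto
qed

lemma sgA0: assumes "4*q+4 \<le> kk n" shows "sg n (4*q) = 4*q + 1"
  using sgA[of 0 q n] assms by simp

lemma m_cases: "n \<ge> 4 \<Longrightarrow> n - kk n = 4 \<or> n - kk n = 5 \<or> n - kk n = 6 \<or> n - kk n = 7"
  using kk_props[of n] by auto

lemma sgB0: assumes "n \<ge> 4" shows "sg n (kk n) = kk n + 1"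
  using sgB[of 0 n] kk_props[OF assms] m_cases[OF assms] by (auto simp: tb_def)


lemma tb_lt: "m \<in> {4,5,6,7} \<Longrightarrow> i < m \<Longrightarrow> tb m ! i < m"
proof -
  assume "m \<in> {4,5,6,7}" "i < m"
  hence "i \<in> {0..<7}" by auto
  hence "i = 0 \<or> i = 1 \<or> i = 2 \<or> i = 3 \<or> i = 4 \<or> i = 5 \<or> i = 6" by auto
  thus ?thesis using \<open>m \<in> _\<close> \<open>i < m\<close> by (auto simp: tb_def)
qed

lemma f_lt: "i < 4 \<Longrightarrow> [1,3,0,2::nat] ! i < 4"
proof -
  assume "i < 4"
  hence "i = 0 \<or> i = 1 \<or> i = 2 \<or> i = 3" by auto
  thus ?thesis by auto
qed

lemma block_pow: assumes "i < 4" "4*q+4 \<le> kk n"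
  shows "(sg n ^^ j) (4*q+i) = 4*q + ((\<lambda>i. [1,3,0,2::nat] ! i) ^^ j) i"
proof (induction j)
  case 0 then show ?case by simp
next
  case (Suc j)
  have lt: "((\<lambda>i. [1,3,0,2::nat] ! i) ^^ j) i < 4"
    by (induction j) (use assms f_lt in auto)
  show ?case using Suc sgA[OF lt assms(2)] by simp
qed

lemma tail_pow: assumes "n \<ge> 4" "i < n - kk n"
  shows "(sg n ^^ j) (kk n+i) = kk n + ((\<lambda>i. tb (n - kk n) ! i) ^^ j) i"
proof (induction j)
  case 0 then show ?case by simp
next
  case (Suc j)
  have m: "n - kk n \<in> {4,5,6,7}" using m_cases[OF assms(1)] by auto
  have lt: "((\<lambda>i. tb (n - kk n) ! i) ^^ j) i < n - kk n"
    by (induction j) (use assms tb_lt[OF m] in auto)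
  show ?case using Suc sgB[OF lt] by simp
qed

lemma f_cyc: "i < 4 \<Longrightarrow> ((\<lambda>i. [1,3,0,2::nat] ! i) ^^ 4) i = i"
proof -
  assume "i < 4"
  hence "i = 0 \<or> i = 1 \<or> i = 2 \<or> i = 3" by auto
  thus ?thesis by (auto simp: eval_nat_numeral)
qed

lemma tb_cyc: "m \<in> {4,5,6,7} \<Longrightarrow> i < m \<Longrightarrow>
   ((\<lambda>i. tb m ! i) ^^ 4) i = i \<or> ((\<lambda>i. tb m ! i) ^^ 3) i = i"
proof -
  assume "m \<in> {4,5,6,7}" "i < m"
  hence "i \<in> {0..<7}" by auto
  hence "i = 0 \<or> i = 1 \<or> i = 2 \<or> i = 3 \<or> i = 4 \<or> i = 5 \<or> i = 6" by auto
  thus ?thesis using \<open>m \<in> _\<close> \<open>i < m\<close> by (auto simp: tb_def eval_nat_numeral)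
qed

lemma sg_range: assumes "n \<ge> 4" "x < n" shows "sg n x < n"
  using classify[OF assms]
proof
  assume "\<exists>q i. i < 4 \<and> 4*q+4 \<le> kk n \<and> x = 4*q+i"
  then obtain q i where h: "i < 4" "4*q+4 \<le> kk n" "x = 4*q+i" by blast
  show ?thesis using h sgA[OF h(1,2)] f_lt[OF h(1)] kk_props[OF assms(1)] by simp
next
  assume "\<exists>i. i < n - kk n \<and> x = kk n + i"
  then obtain i where h: "i < n - kk n" "x = kk n + i" by blast
  have m: "n - kk n \<in> {4,5,6,7}" using m_cases[OF assms(1)] by auto
  show ?thesis using h sgB[OF h(1)] tb_lt[OF m h(1)] by simp
qed

lemma sg_cyc: assumes "n \<ge> 4" shows "(sg n ^^ 4) x = x \<or> (sg n ^^ 3) x = x"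
proof (cases "x < n")
  case True
  show ?thesis using classify[OF assms True]
  proof
    assume "\<exists>q i. i < 4 \<and> 4*q+4 \<le> kk n \<and> x = 4*q+i"
    then obtain q i where h: "i < 4" "4*q+4 \<le> kk n" "x = 4*q+i" by blast
    show ?thesis using h block_pow[OF h(1,2), of 4] f_cyc[OF h(1)] by simp
  next
    assume "\<exists>i. i < n - kk n \<and> x = kk n + i"
    then obtain i where h: "i < n - kk n" "x = kk n + i" by blast
    have m: "n - kk n \<in> {4,5,6,7}" using m_cases[OF assms(1)] by auto
    show ?thesis using h tail_pow[OF assms h(1), of 4] tail_pow[OF assms h(1), of 3] tb_cyc[OF m h(1)] by auto
  qed
next
  case False
  then have "\<And>j. (sg n ^^ j) x = x" by (induct_tac j) (auto simp: sg_out)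
  then show ?thesis by blast
qed

definition okp :: "nat \<Rightarrow> nat \<Rightarrow> bool" where
  "okp x y \<longleftrightarrow> x \<noteq> y + 1 \<and> y \<noteq> x + 1 \<and> path_dist x y \<le> 4"

lemma okp_sym: "okp x y \<Longrightarrow> okp y x"
  unfolding okp_def path_dist_def by (auto split: if_splits)

lemma okp_shift: "okp (c + x) (c + y) = okp x y"
  unfolding okp_def path_dist_def by auto

lemma f_edge: "i < 3 \<Longrightarrow> okp ([1,3,0,2::nat] ! i) ([1,3,0,2::nat] ! (i+1))"
proof -
  assume "i < 3"
  hence "i = 0 \<or> i = 1 \<or> i = 2" by auto
  thus ?thesis by (auto simp: okp_def path_dist_def)
qed

lemma tb_edge: "m \<in> {4,5,6,7} \<Longrightarrow> i + 1 < m \<Longrightarrow> okp (tb m ! i) (tb m ! (i+1))"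
proof -
  assume "m \<in> {4,5,6,7}" "i + 1 < m"
  hence "i \<in> {0..<6}" by auto
  hence "i = 0 \<or> i = 1 \<or> i = 2 \<or> i = 3 \<or> i = 4 \<or> i = 5" by auto
  thus ?thesis using \<open>m \<in> _\<close> \<open>i + 1 < m\<close> by (auto simp: tb_def okp_def path_dist_def)
qed

lemma sg_edge: assumes "n \<ge> 4" "a + 1 < n" shows "okp (sg n a) (sg n (a+1))"
proof -
  have "a < n" using assms by simp
  from classify[OF assms(1) this] show ?thesis
proof (elim disjE exE conjE)
  fix q i assume h: "i < 4" "4*q+4 \<le> kk n" "a = 4*q+i"
  show ?thesis
  proof (cases "i < 3")
    case True
    have "sg n (a+1) = 4*q + [1,3,0,2::nat] ! (i+1)" using sgA[of "i+1" q n] h True by (simp add: add.assoc)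
    then show ?thesis using h sgA[OF h(1,2)] f_edge[OF True] okp_shift by simp
  next
    case False
    have i3: "i = 3" using False h by simp
    have e: "a + 1 = 4*(q+1)" using h i3 by simp
    have sa: "sg n a = 4*q + 2" using sgA[OF h(1,2)] h i3 by simp
    have "4*(q+1)+4 \<le> kk n \<or> 4*(q+1) = kk n" using h kk_props(3)[OF assms(1)] by presburger
    hence "sg n (a+1) = 4*q + 5"
    proof
      assume "4*(q+1)+4 \<le> kk n" thus ?thesis using e sgA0[of "q+1" n] by simp
    next
      assume k: "4*(q+1) = kk n"
      show ?thesis using sgB0[OF assms(1)] k e by simp
    qed
    then show ?thesis using sa by (simp add: okp_def path_dist_def)
  qed
next
  fix i assume h: "i < n - kk n" "a = kk n + i"
  have i1: "i + 1 < n - kk n" using h assms by simp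
  have m: "n - kk n \<in> {4,5,6,7}" using m_cases[OF assms(1)] by auto
  have "sg n (a+1) = kk n + tb (n - kk n) ! (i+1)" using sgB[OF i1] h by (simp add: add.assoc)
  then show ?thesis using h sgB[OF h(1)] tb_edge[OF m i1] okp_shift by simp
qed
qed


lemma funpow_fix_mult: "(f ^^ k) x = x \<Longrightarrow> (f ^^ (k*j)) x = x"
proof (induction j)
  case 0 then show ?case by simp
next
  case (Suc j)
  have "(f ^^ (k * Suc j)) x = (f ^^ k) ((f ^^ (k*j)) x)"
    by (simp add: funpow_add mult_Suc_right)
  then show ?case using Suc by simp
qed

lemma sg12: assumes "n \<ge> 4" shows "(sg n ^^ 12) x = x"
  using sg_cyc[OF assms, of x] funpow_fix_mult[where f="sg n" and k=4 and x=x and j=3] funpow_fix_mult[where f="sg n" and k=3 and x=x and j=4] by auto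

lemma sg_inv: assumes "n \<ge> 4" shows "(sg n ^^ 11) (sg n x) = x"
proof -
  have "(sg n ^^ (11+1)) x = (sg n ^^ 11) (sg n x)" by (simp only: funpow_add) simp
  hence "(sg n ^^ 11) (sg n x) = (sg n ^^ 12) x" by simp
  thus ?thesis using sg12[OF assms] by simp
qed

lemma sg_perm: assumes "n \<ge> 4" shows "sg n permutes {0..<n}"
proof (rule bij_imp_permutes)
  have inj: "inj_on (sg n) {0..<n}"
    by (rule inj_on_inverseI[of _ "sg n ^^ 11"]) (use sg_inv[OF assms] in auto)
  have "sg n ` {0..<n} \<subseteq> {0..<n}" using sg_range[OF assms] by auto
  hence "sg n ` {0..<n} = {0..<n}" using endo_inj_surj[OF _ _ inj] by auto
  thus "bij_betw (sg n) {0..<n} {0..<n}" using inj by (simp add: bij_betw_def)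
  show "\<And>x. x \<notin> {0..<n} \<Longrightarrow> sg n x = x" using sg_out by auto
qed

lemma sg_first: assumes "n \<ge> 4" shows "sg n 0 = 1"
proof (cases "4 \<le> kk n")
  case True then show ?thesis using sgA0[of 0 n] by simp
next
  case False
  have "kk n = 0" using False unfolding kk_def by simp
  then show ?thesis using sgB0[OF assms] by simp
qed

lemma tb_last: "m \<in> {4,5,6,7} \<Longrightarrow> path_dist (m - 1) (tb m ! (m - 1)) \<le> 1"
  by (auto simp: tb_def path_dist_def)

lemma pd_shift: "path_dist (c + x) (c + y) = path_dist x y"
  unfolding path_dist_def by auto

lemma sg_last: assumes "n \<ge> 4" shows "path_dist (n - 1) (sg n (n - 1)) \<le> 1"
proof -
  define m where "m = n - kk n"
  have m: "m \<in> {4,5,6,7}" using m_cases[OF assms] unfolding m_def by auto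
  have e: "n - 1 = kk n + (m - 1)" using kk_props[OF assms] unfolding m_def by simp
  have lt: "m - 1 < n - kk n" using m unfolding m_def by auto
  have "sg n (kk n + (m - 1)) = kk n + tb m ! (m - 1)"
    using sgB[OF lt] unfolding m_def .
  hence "path_dist (n - 1) (sg n (n - 1)) = path_dist (m - 1) (tb m ! (m - 1))"
    by (simp only: e pd_shift)
  thus ?thesis using tb_last[OF m] by simp
qed

theorem theorem1p6:
  fixes n :: nat
  assumes "n \<ge> 4"
  shows "\<exists>\<sigma>. \<sigma> permutes {0..<n}
           \<and> two_placement n \<sigma>
           \<and> image_in_power n 4 \<sigma>
           \<and> path_dist 0 (\<sigma> 0) = 1 \<and> path_dist (n - 1) (\<sigma> (n - 1)) \<le> 1
           \<and> (\<forall>x \<in> {0..<n}. cycle_len \<sigma> x \<le> 4)"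
proof (intro exI conjI)
  show "sg n permutes {0..<n}" by (rule sg_perm[OF assms])
  have edge: "okp (sg n a) (sg n b)" if "path_edge n a b" for a b
  proof -
    have "(a + 1 = b \<and> b < n) \<or> (b + 1 = a \<and> a < n)" using that unfolding path_edge_def by blast
    thus ?thesis
    proof
      assume "a + 1 = b \<and> b < n" thus ?thesis using sg_edge[OF assms, of a] by blast
    next
      assume "b + 1 = a \<and> a < n" thus ?thesis using sg_edge[OF assms, of b] okp_sym by blast
    qed
  qed
  show "two_placement n (sg n)" unfolding two_placement_def
  proof (intro allI impI)
    fix a b assume "path_edge n a b"
    hence "okp (sg n a) (sg n b)" by (rule edge)
    thus "\<not> path_edge n (sg n a) (sg n b)" unfolding okp_def path_edge_def by force
  qed
  show "image_in_power n 4 (sg n)" unfolding image_in_power_def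
  proof (intro allI impI)
    fix a b assume "path_edge n a b"
    hence "okp (sg n a) (sg n b)" by (rule edge)
    thus "path_dist (sg n a) (sg n b) \<le> 4" unfolding okp_def by blast
  qed
  show "path_dist 0 (sg n 0) = 1" using sg_first[OF assms] by (simp add: path_dist_def)
  show "path_dist (n - 1) (sg n (n - 1)) \<le> 1" by (rule sg_last[OF assms])
  show "\<forall>x \<in> {0..<n}. cycle_len (sg n) x \<le> 4"
  proof
    fix x
    show "cycle_len (sg n) x \<le> 4"
      using sg_cyc[OF assms, of x] unfolding cycle_len_def
    proof
      assume "(sg n ^^ 4) x = x"
      thus "(LEAST k. 0 < k \<and> (sg n ^^ k) x = x) \<le> 4" by (intro Least_le) simp
    next
      assume "(sg n ^^ 3) x = x"
      hence "(LEAST k. 0 < k \<and> (sg n ^^ k) x = x) \<le> 3" by (intro Least_le) simp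
      thus "(LEAST k. 0 < k \<and> (sg n ^^ k) x = x) \<le> 4" by simp
    qed
  qed
qed

end
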